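(* There is an absolute constant $C>0$ such that the following holds. Let $E \subset \mathbb{R}^2$ be compact with $\mathcal{S}^1(E) < \infty$, let $\mu$ be the one-dimensional spherical measure $\mathcal{S}^1$ restricted to $E$, and let $\sigma$ be normalised arclength measure on $S^1$. Then for every $\mu\times\sigma$-measurable set $A \subset E \times S^1$ we have $\mathrm{Fav}(A) \le C\,(\mu\times\sigma)(A)$.
   Context: For $E \subset \mathbb{R}^2$, $\mathcal{S}^1(E) = \lim_{r_+\to 0}\inf\sum_{B\in\mathcal{B}}\mathrm{diam}(B)$, the infimum over at most countable covers $\mathcal{B}$ of $E$ by open balls of radius at most $r_+$ (one-dimensional spherical measure). $\sigma$ is arclength measure on $S^1$ normalised to have total mass $1$, and $m$ is Lebesgue measure on $\mathbb{R}$. For $(c,\omega)\in\mathbb{R}\times S^1$ let $l_{c,\omega}=\{x\in\mathbb{R}^2 : x\cdot\omega = c\}$. For $A \subset \mathbb{R}^2\times S^1$, the Favard length is $\mathrm{Fav}(A) = (m\times\sigma)(\{(c,\omega)\in\mathbb{R}\times S^1 : (l_{c,\omega}\times\{\omega\})\cap A \ne \emptyset\})$. *)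

theory Defs
  imports "HOL-Analysis.Analysis"
begin

text \<open>Countable covers by open balls (centres c i, radii rho i) of radius at most r;
  radius 0 gives the empty ball, which allows finite covers.\<close>
definition sph_content :: "real \<Rightarrow> (real^2) set \<Rightarrow> ennreal" where
  "sph_content r E = (INF cr \<in> {(c, rho). (\<forall>i::nat. 0 \<le> rho i \<and> rho i \<le> r) \<and>
       E \<subseteq> (\<Union>i. ball (c i) (rho i))}.
       (\<Sum>i. ennreal (diameter (ball ((fst cr) i) ((snd cr) i)))))"

text \<open>One-dimensional spherical measure: the limit as r tends to 0+ of the
  (non-increasing in r) quantities above, i.e. their supremum over r > 0.\<close>
definition spherical1 :: "(real^2) set \<Rightarrow> ennreal" where
  "spherical1 E = (SUP r \<in> {0<..}. sph_content r E)"

definition mu_E :: "(real^2) set \<Rightarrow> (real^2) measure" where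
  "mu_E E = completion (measure_of UNIV (sets borel) (\<lambda>B. spherical1 (B \<inter> E)))"

definition sigma_S1 :: "(real^2) measure" where
  "sigma_S1 = distr (uniform_measure lborel {0..<2*pi}) borel
      (\<lambda>t. vector [cos t, sin t] :: real^2)"

definition Fav :: "((real^2) \<times> (real^2)) set \<Rightarrow> ennreal" where
  "Fav A = outer_measure_of (lborel \<Otimes>\<^sub>M sigma_S1)
      {(c, \<omega>). \<omega> \<in> sphere 0 1 \<and> (\<exists>x. x \<bullet> \<omega> = c \<and> (x, \<omega>) \<in> A)}"

end

theory Submission
  imports Defs
begin

lemma sc_le_cover:
  fixes rho :: "nat \<Rightarrow> real"
  assumes "\<forall>i. 0 \<le> rho i \<and> rho i \<le> r" "X \<subseteq> (\<Union>i. ball (c i) (rho i))"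
  shows "sph_content r X \<le> (\<Sum>i. ennreal (2 * rho i))"
proof -
  have "sph_content r X \<le> (\<Sum>i. ennreal (diameter (ball (fst (c,rho) i) (snd (c,rho) i))))"
    unfolding sph_content_def by (rule INF_lower) (use assms in auto)
  also have "\<dots> = (\<Sum>i. ennreal (2 * rho i))" using assms(1) by (intro suminf_cong) (force simp: not_less)
  finally show ?thesis .
qed

lemma sc_lb:
  assumes "\<And>c (rho::nat\<Rightarrow>real). \<forall>i. 0 \<le> rho i \<and> rho i \<le> r \<Longrightarrow> X \<subseteq> (\<Union>i. ball (c i) (rho i))
     \<Longrightarrow> y \<le> (\<Sum>i. ennreal (2 * rho i))"
  shows "y \<le> sph_content r X"
  unfolding sph_content_def
proof (rule INF_greatest, clarify)
  fix c and rho :: "nat \<Rightarrow> real" assume a: "\<forall>i. 0 \<le> rho i \<and> rho i \<le> r" "X \<subseteq> (\<Union>i. ball (c i) (rho i))"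
  then have "y \<le> (\<Sum>i. ennreal (2 * rho i))" using assms by blast
  moreover have "(\<Sum>i. ennreal (diameter (ball (fst (c,rho) i) (snd (c,rho) i)))) = (\<Sum>i. ennreal (2 * rho i))"
    using a(1) by (intro suminf_cong) (force simp: not_less)
  ultimately show "y \<le> (\<Sum>i. ennreal (diameter (ball (fst (c,rho) i) (snd (c,rho) i))))"
    by simp
qed

lemma sc_less:
  assumes "sph_content r X < a"
  obtains c and rho :: "nat \<Rightarrow> real" where "\<forall>i. 0 \<le> rho i \<and> rho i \<le> r" "X \<subseteq> (\<Union>i. ball (c i) (rho i))"
     "(\<Sum>i. ennreal (2 * rho i)) < a"
proof -
  from assms obtain cr where cr: "cr \<in> {(c, rho). (\<forall>i::nat. 0 \<le> rho i \<and> rho i \<le> r) \<and>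
       X \<subseteq> (\<Union>i. ball (c i) (rho i))}" "(\<Sum>i. ennreal (diameter (ball ((fst cr) i) ((snd cr) i)))) < a"
    unfolding sph_content_def INF_less_iff by blast
  obtain c rho where "cr = (c, rho)" by fastforce
  moreover have "(\<Sum>i. ennreal (diameter (ball (c i) (rho i)))) = (\<Sum>i. ennreal (2 * rho i))"
    using cr(1) \<open>cr = (c, rho)\<close> by (intro suminf_cong) (force simp: not_less)
  ultimately show ?thesis using that cr by auto
qed

lemma sc_mono: "X \<subseteq> Y \<Longrightarrow> sph_content r X \<le> sph_content r Y"
  unfolding sph_content_def by (rule INF_superset_mono) auto

lemma sc_antimono: "r \<le> r' \<Longrightarrow> sph_content r' X \<le> sph_content r X"
  unfolding sph_content_def by (rule INF_superset_mono) (auto intro: order_trans)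

lemma sc_empty: "0 \<le> r \<Longrightarrow> sph_content r {} = 0"
  using sc_le_cover[of "\<lambda>_. 0" r "{}" "\<lambda>_. 0"] by simp

lemma geom_eps: "0 < e \<Longrightarrow> (\<Sum>n. ennreal (e / 2 ^ Suc n)) = ennreal e"
proof -
  assume e: "0 < e"
  have "(\<lambda>n. e * (1/2::real)^Suc n) sums (e * 1)"
    by (intro sums_mult power_half_series)
  then have s: "(\<lambda>n. e / 2 ^ Suc n) sums e" by (simp add: power_one_over)
  then have "(\<Sum>n. ennreal (e / 2 ^ Suc n)) = ennreal (\<Sum>n. e / 2 ^ Suc n)"
    using e by (intro suminf_ennreal2) (auto simp: sums_iff)
  with s show ?thesis by (simp add: sums_iff)
qed

lemma sc_UN:
  fixes X :: "nat \<Rightarrow> (real^2) set"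
  shows "sph_content r (\<Union>n. X n) \<le> (\<Sum>n. sph_content r (X n))"
proof (rule ennreal_le_epsilon)
  fix e :: real assume fin: "(\<Sum>n. sph_content r (X n)) < top" and e: "0 < e"
  have "\<exists>p. (\<forall>i. 0 \<le> snd p i \<and> snd p i \<le> r) \<and> X n \<subseteq> (\<Union>i. ball (fst p i) (snd p i)) \<and>
     (\<Sum>i. ennreal (2 * snd p i)) < sph_content r (X n) + ennreal (e / 2 ^ Suc n)" for n
  proof -
    have "sph_content r (X n) < top" using ennreal_suminf_lessD[OF fin] .
    moreover have "0 < ennreal (e / 2 ^ Suc n)" using e by simp
    ultimately have "sph_content r (X n) + 0 < sph_content r (X n) + ennreal (e / 2 ^ Suc n)"
      by (subst ennreal_add_left_cancel_less) simp
    then have "sph_content r (X n) < sph_content r (X n) + ennreal (e / 2 ^ Suc n)" by simp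
    then obtain c rho where "\<forall>i. 0 \<le> rho i \<and> rho i \<le> r" "X n \<subseteq> (\<Union>i. ball (c i) (rho i))"
      "(\<Sum>i. ennreal (2 * rho i)) < sph_content r (X n) + ennreal (e / 2 ^ Suc n)"
      by (rule sc_less)
    then show ?thesis by (intro exI[of _ "(c, rho)"]) simp
  qed
  then have "\<forall>n. \<exists>p. (\<forall>i. 0 \<le> snd p i \<and> snd p i \<le> r) \<and> X n \<subseteq> (\<Union>i. ball (fst p i) (snd p i)) \<and>
     (\<Sum>i. ennreal (2 * snd p i)) < sph_content r (X n) + ennreal (e / 2 ^ Suc n)" by blast
  from choice[OF this] obtain P where P: "\<And>n. (\<forall>i. 0 \<le> snd (P n) i \<and> snd (P n) i \<le> r) \<and> X n \<subseteq> (\<Union>i. ball (fst (P n) i) (snd (P n) i)) \<and>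
     (\<Sum>i. ennreal (2 * snd (P n) i)) < sph_content r (X n) + ennreal (e / 2 ^ Suc n)"
    by blast
  define c where "c k = fst (P (fst (prod_decode k))) (snd (prod_decode k))" for k
  define rho where "rho k = snd (P (fst (prod_decode k))) (snd (prod_decode k))" for k
  have "sph_content r (\<Union>n. X n) \<le> (\<Sum>k. ennreal (2 * rho k))"
  proof (rule sc_le_cover)
    show "\<forall>i. 0 \<le> rho i \<and> rho i \<le> r" using P by (simp add: rho_def)
    show "(\<Union>n. X n) \<subseteq> (\<Union>i. ball (c i) (rho i))"
    proof
      fix x assume "x \<in> (\<Union>n. X n)"
      then obtain n where "x \<in> X n" by auto
      with P[of n] obtain i where "x \<in> ball (fst (P n) i) (snd (P n) i)" by blast
      then show "x \<in> (\<Union>i. ball (c i) (rho i))"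
        by (intro UN_I[of "prod_encode (n, i)"]) (auto simp: c_def rho_def)
    qed
  qed
  also have "(\<Sum>k. ennreal (2 * rho k)) = (\<Sum>n. \<Sum>i. ennreal (2 * snd (P n) i))"
  proof -
    have "(\<Sum>k. (\<lambda>(n,i). ennreal (2 * snd (P n) i)) (prod_decode k)) = (\<Sum>n. \<Sum>i. ennreal (2 * snd (P n) i))"
      by (rule suminf_ennreal_2dimen) simp
    then show ?thesis by (simp add: case_prod_beta rho_def)
  qed
  also have "\<dots> \<le> (\<Sum>n. sph_content r (X n) + ennreal (e / 2 ^ Suc n))"
    using P by (intro suminf_le) (auto intro: less_imp_le)
  also have "\<dots> = (\<Sum>n. sph_content r (X n)) + ennreal e"
    using geom_eps[OF e] by (simp add: suminf_add[symmetric])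
  finally show "sph_content r (\<Union>n. X n) \<le> (\<Sum>n. sph_content r (X n)) + ennreal e" .
qed

lemma S_ge_sc: "0 < r \<Longrightarrow> sph_content r X \<le> spherical1 X"
  unfolding spherical1_def by (rule SUP_upper) simp

lemma S_mono: "X \<subseteq> Y \<Longrightarrow> spherical1 X \<le> spherical1 Y"
  unfolding spherical1_def by (intro SUP_mono) (auto intro: sc_mono)

lemma S_empty: "spherical1 {} = 0"
proof -
  have "spherical1 {} \<le> 0"
    unfolding spherical1_def by (rule SUP_least) (simp add: sc_empty)
  then show ?thesis by simp
qed

lemma S_UN:
  fixes X :: "nat \<Rightarrow> (real^2) set"
  shows "spherical1 (\<Union>n. X n) \<le> (\<Sum>n. spherical1 (X n))"
  unfolding spherical1_def[of "\<Union>n. X n"]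
proof (rule SUP_least)
  fix r :: real assume "r \<in> {0<..}"
  have "sph_content r (\<Union>n. X n) \<le> (\<Sum>n. sph_content r (X n))" by (rule sc_UN)
  also have "\<dots> \<le> (\<Sum>n. spherical1 (X n))"
    using \<open>r \<in> {0<..}\<close> by (intro suminf_le) (auto intro: S_ge_sc)
  finally show "sph_content r (\<Union>n. X n) \<le> (\<Sum>n. spherical1 (X n))" .
qed

lemma S_Un: "spherical1 (A \<union> B) \<le> spherical1 A + spherical1 B"
proof -
  define X where "X n = (if n = 0 then A else if n = 1 then B else {})" for n :: nat
  have "A \<union> B = (\<Union>n. X n)"
    by (auto simp: X_def split: if_splits)
  then have "spherical1 (A \<union> B) \<le> (\<Sum>n. spherical1 (X n))" using S_UN by simp
  also have "(\<Sum>n. spherical1 (X n)) = (\<Sum>n\<in>{0,1}. spherical1 (X n))"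
    by (rule suminf_finite) (auto simp: X_def S_empty)
  also have "\<dots> = spherical1 A + spherical1 B" by (simp add: X_def)
  finally show ?thesis .
qed

lemma sc_sep:
  assumes r: "0 < r" "2 * r < d" and sep: "\<And>a b. a \<in> A \<Longrightarrow> b \<in> B \<Longrightarrow> d \<le> dist a b"
  shows "sph_content r A + sph_content r B \<le> sph_content r (A \<union> B)"
proof (rule sc_lb)
  fix c and rho :: "nat \<Rightarrow> real"
  assume cov: "\<forall>i. 0 \<le> rho i \<and> rho i \<le> r" "A \<union> B \<subseteq> (\<Union>i. ball (c i) (rho i))"
  define ra where "ra i = (if ball (c i) (rho i) \<inter> A \<noteq> {} then rho i else 0)" for i
  define rb where "rb i = (if ball (c i) (rho i) \<inter> B \<noteq> {} then rho i else 0)" for i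
  have "sph_content r A \<le> (\<Sum>i. ennreal (2 * ra i))"
  proof (rule sc_le_cover)
    show "\<forall>i. 0 \<le> ra i \<and> ra i \<le> r" using cov r by (simp add: ra_def)
    show "A \<subseteq> (\<Union>i. ball (c i) (ra i))"
    proof
      fix x assume "x \<in> A"
      with cov obtain i where "x \<in> ball (c i) (rho i)" by blast
      with \<open>x \<in> A\<close> show "x \<in> (\<Union>i. ball (c i) (ra i))" by (intro UN_I[of i]) (auto simp: ra_def)
    qed
  qed
  moreover have "sph_content r B \<le> (\<Sum>i. ennreal (2 * rb i))"
  proof (rule sc_le_cover)
    show "\<forall>i. 0 \<le> rb i \<and> rb i \<le> r" using cov r by (simp add: rb_def)
    show "B \<subseteq> (\<Union>i. ball (c i) (rb i))"
    proof
      fix x assume "x \<in> B"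
      with cov obtain i where "x \<in> ball (c i) (rho i)" by blast
      with \<open>x \<in> B\<close> show "x \<in> (\<Union>i. ball (c i) (rb i))" by (intro UN_I[of i]) (auto simp: rb_def)
    qed
  qed
  moreover have "(\<Sum>i. ennreal (2 * ra i)) + (\<Sum>i. ennreal (2 * rb i)) \<le> (\<Sum>i. ennreal (2 * rho i))"
  proof -
    have "(\<Sum>i. ennreal (2 * ra i)) + (\<Sum>i. ennreal (2 * rb i)) = (\<Sum>i. ennreal (2 * ra i) + ennreal (2 * rb i))"
      by (rule suminf_add) auto
    also have "\<dots> \<le> (\<Sum>i. ennreal (2 * rho i))"
    proof (rule suminf_le)
      fix i
      have "\<not> (ball (c i) (rho i) \<inter> A \<noteq> {} \<and> ball (c i) (rho i) \<inter> B \<noteq> {})"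
      proof
        assume "ball (c i) (rho i) \<inter> A \<noteq> {} \<and> ball (c i) (rho i) \<inter> B \<noteq> {}"
        then obtain a b where ab: "a \<in> A" "b \<in> B" "dist (c i) a < rho i" "dist (c i) b < rho i" by auto
        have "dist a b \<le> dist (c i) a + dist (c i) b" by (metis dist_commute dist_triangle)
        also have "\<dots> < 2 * r" using ab cov by (smt (verit))
        finally show False using sep[OF ab(1,2)] r by simp
      qed
      then show "ennreal (2 * ra i) + ennreal (2 * rb i) \<le> ennreal (2 * rho i)"
        by (auto simp: ra_def rb_def)
    qed auto
    finally show ?thesis .
  qed
  ultimately show "sph_content r A + sph_content r B \<le> (\<Sum>i. ennreal (2 * rho i))"
    by (meson add_mono order_trans)
qed

lemma S_sep:
  assumes d: "0 < d" and sep: "\<And>a b. a \<in> A \<Longrightarrow> b \<in> B \<Longrightarrow> d \<le> dist a b"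
  shows "spherical1 A + spherical1 B \<le> spherical1 (A \<union> B)"
proof -
  have ne: "{0::real<..} \<noteq> {}" by (auto intro: exI[of _ 1])
  have "spherical1 A + spherical1 B = (SUP r1\<in>{0<..}. sph_content r1 A + spherical1 B)"
    unfolding spherical1_def[of A] by (rule ennreal_SUP_add_left[OF ne, symmetric])
  also have "\<dots> \<le> spherical1 (A \<union> B)"
  proof (rule SUP_least)
    fix r1 :: real assume r1: "r1 \<in> {0<..}"
    have "sph_content r1 A + spherical1 B = (SUP r2\<in>{0<..}. sph_content r1 A + sph_content r2 B)"
      unfolding spherical1_def[of B] by (rule ennreal_SUP_add_right[OF ne])
    also have "\<dots> \<le> spherical1 (A \<union> B)"
    proof (rule SUP_least)
      fix r2 :: real assume r2: "r2 \<in> {0<..}"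
      define m where "m = min (min r1 r2) (d / 4)"
      have m: "0 < m" "m \<le> r1" "m \<le> r2" "2 * m < d" using r1 r2 d by (auto simp: m_def)
      have "sph_content r1 A + sph_content r2 B \<le> sph_content m A + sph_content m B"
        using m by (intro add_mono sc_antimono)
      also have "\<dots> \<le> sph_content m (A \<union> B)" using m sep by (intro sc_sep) auto
      also have "\<dots> \<le> spherical1 (A \<union> B)" using m by (intro S_ge_sc)
      finally show "sph_content r1 A + sph_content r2 B \<le> spherical1 (A \<union> B)" .
    qed
    finally show "sph_content r1 A + spherical1 B \<le> spherical1 (A \<union> B)" .
  qed
  finally show ?thesis .
qed

lemma S_closed_split:
  assumes F: "closed F"
  shows "spherical1 (X \<inter> F) + spherical1 (X - F) \<le> spherical1 X"
proof (cases "F = {} \<or> spherical1 X = top")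
  case True
  then show ?thesis by (auto simp: S_empty)
next
  case False
  then have Fne: "F \<noteq> {}" and fin: "spherical1 X < top" by (auto simp: top.not_eq_extremum)
  define h where "h x = infdist x F" for x
  define Xn where "Xn n = {x\<in>X. 1 / (real n + 1) \<le> h x}" for n :: nat
  define D where "D k = {x\<in>X. 1 / (real k + 2) \<le> h x \<and> h x < 1 / (real k + 1)}" for k :: nat
  have hpos: "0 < h x" if "x \<notin> F" for x
    using infdist_pos_not_in_closed[OF F Fne that] by (simp add: h_def)
  have hF: "h x \<le> dist x a" if "a \<in> F" for x a
    using infdist_le[OF that] by (simp add: h_def)
  have htri: "h x \<le> h y + dist x y" for x y
    unfolding h_def by (rule infdist_triangle)
  have sepXn: "spherical1 (X \<inter> F) + spherical1 (Xn n) \<le> spherical1 X" for n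
  proof -
    have "spherical1 (X \<inter> F) + spherical1 (Xn n) \<le> spherical1 ((X \<inter> F) \<union> Xn n)"
    proof (rule S_sep[where d = "1 / (real n + 1)"])
      fix a b assume "a \<in> X \<inter> F" "b \<in> Xn n"
      then show "1 / (real n + 1) \<le> dist a b"
        using hF[of a b] by (auto simp: Xn_def dist_commute)
    qed simp
    also have "\<dots> \<le> spherical1 X" by (rule S_mono) (auto simp: Xn_def)
    finally show ?thesis .
  qed
  have cov: "X - F \<subseteq> Xn n \<union> (\<Union>k. D (k + n))" for n
  proof
    fix x assume x: "x \<in> X - F"
    show "x \<in> Xn n \<union> (\<Union>k. D (k + n))"
    proof (cases "1 / (real n + 1) \<le> h x")
      case True then show ?thesis using x by (auto simp: Xn_def)
    next
      case False
      have hx: "0 < h x" using x hpos by auto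
      obtain N where N: "0 < N" "inverse (real N) < h x" using ex_inverse_of_nat_less[OF hx] by blast
      have ex: "\<exists>m. 1 / (real m + 1) \<le> h x"
        by (rule exI[of _ N]) (use N hx in \<open>auto simp: field_simps\<close>)
      define m where "m = (LEAST m. 1 / (real m + 1) \<le> h x)"
      have m1: "1 / (real m + 1) \<le> h x" unfolding m_def by (rule LeastI_ex[OF ex])
      have m2: "\<not> 1 / (real j + 1) \<le> h x" if "j < m" for j
        using not_less_Least[OF that[unfolded m_def]] by (simp add: m_def)
      have "n < m"
      proof (rule ccontr)
        assume "\<not> n < m"
        then have "1 / (real n + 1) \<le> 1 / (real m + 1)" by (intro divide_left_mono) auto
        with m1 False show False by simp
      qed
      then obtain k where k: "m = Suc (k + n)" by (metis less_iff_Suc_add add.commute)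
      have "\<not> 1 / (real (k + n) + 1) \<le> h x" using m2[of "k + n"] k by simp
      moreover have "1 / (real (k + n) + 2) \<le> h x" using m1 k by (simp add: add.commute add.left_commute)
      ultimately have "x \<in> D (k + n)" using x by (auto simp: D_def)
      then show ?thesis by blast
    qed
  qed
  have cov2: "spherical1 (X - F) \<le> spherical1 (Xn n) + (\<Sum>k. spherical1 (D (k + n)))" for n
  proof -
    have "spherical1 (X - F) \<le> spherical1 (Xn n \<union> (\<Union>k. D (k + n)))" by (rule S_mono[OF cov])
    also have "\<dots> \<le> spherical1 (Xn n) + spherical1 (\<Union>k. D (k + n))" by (rule S_Un)
    also have "\<dots> \<le> spherical1 (Xn n) + (\<Sum>k. spherical1 (D (k + n)))" by (intro add_mono S_UN order_refl)
    finally show ?thesis .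
  qed
  have par: "(\<Sum>k<N. spherical1 (D (2 * k + p))) \<le> spherical1 (\<Union>k<N. D (2 * k + p))" for N p
  proof (induction N)
    case 0 then show ?case by simp
  next
    case (Suc N)
    have "(\<Sum>k<Suc N. spherical1 (D (2 * k + p))) = (\<Sum>k<N. spherical1 (D (2 * k + p))) + spherical1 (D (2 * N + p))"
      by simp
    also have "\<dots> \<le> spherical1 (\<Union>k<N. D (2 * k + p)) + spherical1 (D (2 * N + p))"
      using Suc by (intro add_mono order_refl)
    also have "\<dots> \<le> spherical1 ((\<Union>k<N. D (2 * k + p)) \<union> D (2 * N + p))"
    proof (cases "N = 0")
      case True then show ?thesis by (simp add: S_empty)
    next
      case False
      show ?thesis
      proof (rule S_sep[where d = "1 / (real (2 * N + p)) - 1 / (real (2 * N + p) + 1)"])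
        have "0 < real (2 * N + p)" using False by simp
        then have "1 / (real (2 * N + p) + 1) < 1 / (real (2 * N + p))"
          by (intro divide_strict_left_mono) auto
        then show "0 < 1 / (real (2 * N + p)) - 1 / (real (2 * N + p) + 1)"
          by simp
        fix a b assume a: "a \<in> (\<Union>k<N. D (2 * k + p))" and b: "b \<in> D (2 * N + p)"
        from a obtain k where k: "k < N" "a \<in> D (2 * k + p)" by auto
        have "1 / (real (2 * N + p)) \<le> 1 / (real (2 * k + p) + 2)"
          using k(1) by (intro divide_left_mono) auto
        also have "\<dots> \<le> h a" using k(2) by (simp add: D_def)
        finally have ha: "1 / (real (2 * N + p)) \<le> h a" .
        have hb: "h b < 1 / (real (2 * N + p) + 1)" using b by (simp add: D_def)
        show "1 / (real (2 * N + p)) - 1 / (real (2 * N + p) + 1) \<le> dist a b"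
          using ha hb htri[of a b] by simp
      qed
    qed
    also have "\<dots> = spherical1 (\<Union>k<Suc N. D (2 * k + p))"
      by (simp add: lessThan_Suc Un_commute)
    finally show ?case .
  qed
  have parX: "(\<Sum>k<N. spherical1 (D (2 * k + p))) \<le> spherical1 X" for N p
  proof -
    have "(\<Union>k<N. D (2 * k + p)) \<subseteq> X" by (auto simp: D_def)
    then show ?thesis using par[where N=N and p=p] S_mono by (meson order_trans)
  qed
  have split2: "(\<Sum>k<2 * N. spherical1 (D k)) = (\<Sum>k<N. spherical1 (D (2 * k + 0))) + (\<Sum>k<N. spherical1 (D (2 * k + 1)))" for N
    by (induction N) (simp_all add: algebra_simps)
  have sumD: "(\<Sum>k. spherical1 (D k)) \<le> 2 * spherical1 X"
    unfolding suminf_eq_SUP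
  proof (rule SUP_least)
    fix N
    have "(\<Sum>k<N. spherical1 (D k)) \<le> (\<Sum>k<2 * N. spherical1 (D k))"
      by (intro sum_mono2) auto
    also have "\<dots> \<le> spherical1 X + spherical1 X" unfolding split2 by (intro add_mono parX)
    finally show "(\<Sum>k<N. spherical1 (D k)) \<le> 2 * spherical1 X" by (simp add: mult_2)
  qed
  have sumDfin: "(\<Sum>k. spherical1 (D k)) < top"
    using sumD fin by (metis ennreal_mult_less_top ennreal_numeral_less_top le_less_trans)
  define a where "a k = enn2real (spherical1 (D k))" for k
  have Da: "spherical1 (D k) = ennreal (a k)" for k
    using ennreal_suminf_lessD[OF sumDfin, of k] by (simp add: a_def less_top)
  have summ: "summable a"
  proof (rule summable_suminf_not_top)
    show "0 \<le> a i" for i by (simp add: a_def)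
    show "(\<Sum>i. ennreal (a i)) \<noteq> top" using sumDfin unfolding Da[symmetric] by simp
  qed
  show ?thesis
  proof (rule ennreal_le_epsilon)
    fix e :: real assume e: "0 < e"
    obtain n where n: "norm (\<Sum>i. a (i + n)) < e" using suminf_exist_split[OF e summ] by blast
    have "(\<Sum>k. spherical1 (D (k + n))) = ennreal (\<Sum>k. a (k + n))"
      unfolding Da by (intro suminf_ennreal2) (auto simp: a_def intro: summable_ignore_initial_segment[OF summ, unfolded a_def])
    also have "\<dots> \<le> ennreal e" using n by (intro ennreal_leI) simp
    finally have tail: "(\<Sum>k. spherical1 (D (k + n))) \<le> ennreal e" .
    have "spherical1 (X \<inter> F) + spherical1 (X - F) \<le> spherical1 (X \<inter> F) + (spherical1 (Xn n) + (\<Sum>k. spherical1 (D (k + n))))"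
      by (intro add_mono order_refl cov2)
    also have "\<dots> = (spherical1 (X \<inter> F) + spherical1 (Xn n)) + (\<Sum>k. spherical1 (D (k + n)))"
      by (simp add: add.assoc)
    also have "\<dots> \<le> spherical1 X + ennreal e" by (intro add_mono sepXn tail)
    finally show "spherical1 (X \<inter> F) + spherical1 (X - F) \<le> spherical1 X + ennreal e" .
  qed
qed

lemma S_restrict_ms:
  "measure_space UNIV (sets borel) (\<lambda>B. spherical1 (B \<inter> E))"
proof -
  define g where "g B = spherical1 (B \<inter> E)" for B :: "(real^2) set"
  interpret P: sigma_algebra "UNIV :: (real^2) set" "Pow UNIV" by (rule sigma_algebra_Pow)
  have oms: "outer_measure_space (Pow UNIV) g"
    unfolding outer_measure_space_def positive_def increasing_def countably_subadditive_def
  proof (intro conjI allI ballI impI)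
    show "g {} = 0" by (simp add: g_def S_empty)
    fix x y :: "(real^2) set" assume "x \<subseteq> y" then show "g x \<le> g y"
      unfolding g_def by (intro S_mono) auto
  next
    fix A :: "nat \<Rightarrow> (real^2) set"
    have "g (\<Union>i. A i) = spherical1 (\<Union>i. A i \<inter> E)" by (simp add: g_def)
    also have "\<dots> \<le> (\<Sum>i. g (A i))" unfolding g_def by (rule S_UN)
    finally show "g (\<Union>i. A i) \<le> (\<Sum>i. g (A i))" .
  qed
  define L where "L = lambda_system UNIV (Pow UNIV) g"
  have ms: "measure_space UNIV L g"
    unfolding L_def by (rule P.caratheodory_lemma[OF oms])
  then have sa: "sigma_algebra UNIV L" by (simp add: measure_space_def)
  have opn: "U \<in> L" if "open U" for U
    unfolding L_def lambda_system_def
  proof (intro CollectI conjI ballI)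
    fix x :: "(real^2) set"
    have cl: "closed (UNIV - U)" using that by (simp add: closed_def)
    have "g (U \<inter> x) + g ((UNIV - U) \<inter> x) = spherical1 ((x \<inter> E) \<inter> (UNIV - U)) + spherical1 ((x \<inter> E) - (UNIV - U))"
      unfolding g_def by (simp add: add.commute Int_ac Diff_eq)
    also have "\<dots> \<le> spherical1 (x \<inter> E)" by (rule S_closed_split[OF cl])
    finally have le: "g (U \<inter> x) + g ((UNIV - U) \<inter> x) \<le> g x" by (simp add: g_def)
    have eq: "x \<inter> E = (U \<inter> x \<inter> E) \<union> ((UNIV - U) \<inter> x \<inter> E)" by blast
    have "g x \<le> g (U \<inter> x) + g ((UNIV - U) \<inter> x)"
      unfolding g_def using S_Un[of "U \<inter> x \<inter> E" "(UNIV - U) \<inter> x \<inter> E"]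
      by (subst eq) (simp add: Int_assoc)
    with le show "g (U \<inter> x) + g ((UNIV - U) \<inter> x) = g x" by simp
  qed auto
  have "sets borel \<subseteq> L"
    unfolding sets_borel by (rule sigma_algebra.sigma_sets_subset[OF sa]) (auto intro: opn)
  then have "measure_space UNIV (sets borel) g"
    by (intro measure_down[OF ms]) (metis sets.sigma_algebra_axioms space_borel)
  then show ?thesis by (simp add: g_def[abs_def])
qed

lemma sets_mu_E_base: "sets (measure_of UNIV (sets borel) (\<lambda>B. spherical1 (B \<inter> E))) = sets borel"
proof -
  have "sets (measure_of UNIV (sets borel) (\<lambda>B. spherical1 (B \<inter> E))) = sigma_sets UNIV (sets borel)"
    by (rule sets_measure_of) simp
  then show ?thesis using sets.sigma_sets_eq[of borel] by simp
qed

lemma emeasure_mu_E_base: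
  assumes "B \<in> sets borel"
  shows "emeasure (measure_of UNIV (sets borel) (\<lambda>B. spherical1 (B \<inter> E))) B = spherical1 (B \<inter> E)"
proof -
  have ms: "measure_space UNIV (sets borel) (\<lambda>B. spherical1 (B \<inter> E))" by (rule S_restrict_ms)
  show ?thesis
    by (rule emeasure_measure_of_sigma) (use ms assms in \<open>auto simp: measure_space_def\<close>)
qed

lemma emeasure_mu_E:
  assumes "B \<in> sets borel"
  shows "emeasure (mu_E E) B = spherical1 (B \<inter> E)"
  unfolding mu_E_def using assms
  by (subst emeasure_completion) (auto simp: sets_mu_E_base emeasure_mu_E_base)

lemma space_mu_E[simp]: "space (mu_E E) = UNIV"
  unfolding mu_E_def by (simp add: space_measure_of_conv)

lemma sets_mu_E_borel: "B \<in> sets borel \<Longrightarrow> B \<in> sets (mu_E E)"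
  unfolding mu_E_def by (simp add: sets_mu_E_base)

lemma mu_E_upper:
  assumes "A \<in> sets (mu_E E)"
  shows "\<exists>B\<in>sets borel. A \<subseteq> B \<and> emeasure (mu_E E) B = emeasure (mu_E E) A"
proof -
  let ?M = "measure_of UNIV (sets borel) (\<lambda>B. spherical1 (B \<inter> E))"
  have A: "A \<in> sets (completion ?M)" using assms by (simp add: mu_E_def)
  obtain N where N: "N \<in> null_sets ?M" "null_part ?M A \<subseteq> N" using null_part[OF A] by blast
  define B where "B = main_part ?M A \<union> N"
  have mp: "main_part ?M A \<in> sets ?M" by (rule main_part_sets[OF A])
  moreover have "N \<in> sets ?M" using N by auto
  ultimately have Bs: "B \<in> sets ?M" unfolding B_def by blast
  have "A \<subseteq> B" using main_part_null_part_Un[OF A] N by (auto simp: B_def)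
  moreover have "emeasure ?M B = emeasure ?M (main_part ?M A)"
    unfolding B_def using N(1) mp by (rule emeasure_Un_null_set[rotated])
  ultimately show ?thesis using Bs A
    by (intro bexI[of _ B]) (auto simp: mu_E_def sets_mu_E_base)
qed

lemma sets_sigma_S1[simp, measurable_cong]: "sets sigma_S1 = sets borel"
  by (simp add: sigma_S1_def)

lemma space_sigma_S1[simp]: "space sigma_S1 = UNIV"
  by (simp add: sigma_S1_def)

lemma circ_eq: "(\<lambda>t::real. vector [cos t, sin t] :: real^2) = (\<lambda>t. \<chi> i. if i = 1 then cos t else sin t)"
proof (rule ext)
  fix t :: real
  show "(vector [cos t, sin t] :: real^2) = (\<chi> i. if i = 1 then cos t else sin t)"
  proof (subst vec_eq_iff, rule allI)
    fix i :: 2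
    have "i = 1 \<or> i = 2" by (rule exhaust_2)
    then show "(vector [cos t, sin t] :: real^2) $ i = (\<chi> i. if i = 1 then cos t else sin t) $ i"
      by (elim disjE) simp_all
  qed
qed

lemma circ_meas: "(\<lambda>t::real. vector [cos t, sin t] :: real^2) \<in> borel_measurable borel"
  unfolding circ_eq
proof (intro borel_measurable_continuous_onI continuous_on_vec_lambda)
  fix i :: 2
  show "continuous_on UNIV (\<lambda>x::real. if i = 1 then cos x else sin x)"
    by (cases "i = 1") (simp_all add: continuous_on_cos continuous_on_sin continuous_on_id)
qed

lemma circ_meas2: "(\<lambda>t::real. vector [cos t, sin t] :: real^2) \<in> measurable (uniform_measure lborel {0..<2*pi}) borel"
proof -
  have "(\<lambda>t::real. vector [cos t, sin t] :: real^2) \<in> measurable lborel borel"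
    using circ_meas by simp
  moreover have "measurable (uniform_measure lborel {0..<2*pi}) (borel :: (real^2) measure) = measurable lborel borel"
    by (rule measurable_cong_sets) simp_all
  ultimately show ?thesis by simp
qed

lemma sigma_S1_UNIV: "emeasure sigma_S1 UNIV = 1"
proof -
  have "emeasure sigma_S1 UNIV = emeasure (uniform_measure lborel {0..<2*pi}) UNIV"
    unfolding sigma_S1_def
    by (subst emeasure_distr[OF circ_meas2]) auto
  also have "\<dots> = emeasure lborel {0..<2*pi} / emeasure lborel {0..<2*pi}"
    by (subst emeasure_uniform_measure) auto
  also have "\<dots> = 1" by (simp add: ennreal_divide_self)
  finally show ?thesis .
qed

lemma finite_sigma_S1: "finite_measure sigma_S1"
  by (rule finite_measureI) (simp add: sigma_S1_UNIV)

interpretation S1: finite_measure sigma_S1 by (rule finite_sigma_S1)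

interpretation LS: pair_sigma_finite lborel sigma_S1
  by (intro pair_sigma_finite.intro lborel.sigma_finite_measure_axioms S1.sigma_finite_measure_axioms)

definition TF :: "((real^2) \<times> (real^2)) set \<Rightarrow> (real \<times> (real^2)) set" where
  "TF A = {(c, \<omega>). \<omega> \<in> sphere 0 1 \<and> (\<exists>x. x \<bullet> \<omega> = c \<and> (x, \<omega>) \<in> A)}"

lemma Fav_TF: "Fav A = outer_measure_of (lborel \<Otimes>\<^sub>M sigma_S1) (TF A)"
  by (simp add: Fav_def TF_def)

lemma Fav_mono: "A \<subseteq> B \<Longrightarrow> Fav A \<le> Fav B"
  unfolding Fav_TF by (intro outer_measure_of_mono) (auto simp: TF_def)

lemma Fav_UN: "Fav (\<Union>i. A i) \<le> (\<Sum>i. Fav (A i))"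
proof -
  let ?M = "lborel \<Otimes>\<^sub>M sigma_S1"
  have "\<forall>i. \<exists>B. B \<in> sets ?M \<and> TF (A i) \<subseteq> B \<and> outer_measure_of ?M (TF (A i)) = emeasure ?M B"
  proof
    fix i
    show "\<exists>B. B \<in> sets ?M \<and> TF (A i) \<subseteq> B \<and> outer_measure_of ?M (TF (A i)) = emeasure ?M B"
      using outer_measure_of_attain[of "TF (A i)" ?M] by (simp add: space_pair_measure, blast)
  qed
  from choice[OF this] obtain B where B: "\<And>i. B i \<in> sets ?M" "\<And>i. TF (A i) \<subseteq> B i"
    "\<And>i. outer_measure_of ?M (TF (A i)) = emeasure ?M (B i)" by blast
  have "TF (\<Union>i. A i) \<subseteq> (\<Union>i. B i)" using B(2) by (fastforce simp: TF_def)
  then have "Fav (\<Union>i. A i) \<le> outer_measure_of ?M (\<Union>i. B i)"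
    unfolding Fav_TF by (rule outer_measure_of_mono)
  also have "\<dots> = emeasure ?M (\<Union>i. B i)" using B(1) by (intro outer_measure_of_eq) auto
  also have "\<dots> \<le> (\<Sum>i. emeasure ?M (B i))" using B(1) by (intro emeasure_subadditive_countably) auto
  also have "\<dots> = (\<Sum>i. Fav (A i))" by (simp add: Fav_TF B(3))
  finally show ?thesis .
qed

lemma Fav_empty: "Fav {} = 0"
proof -
  have "Fav {} = outer_measure_of (lborel \<Otimes>\<^sub>M sigma_S1) {}" by (simp add: Fav_TF TF_def)
  then show ?thesis by simp
qed

lemma Fav_Un: "Fav (A \<union> B) \<le> Fav A + Fav B"
proof -
  define X where "X n = (if n = 0 then A else if n = 1 then B else {})" for n :: nat
  have "A \<union> B = (\<Union>n. X n)"
    by (auto simp: X_def split: if_splits)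
  then have "Fav (A \<union> B) \<le> (\<Sum>n. Fav (X n))" using Fav_UN by simp
  also have "(\<Sum>n. Fav (X n)) = (\<Sum>n\<in>{0,1}. Fav (X n))"
    by (rule suminf_finite) (auto simp: X_def Fav_empty)
  also have "\<dots> = Fav A + Fav B" by (simp add: X_def)
  finally show ?thesis .
qed

lemma Fav_finite: "finite C \<Longrightarrow> Fav (\<Union>c\<in>C. f c) \<le> (\<Sum>c\<in>C. Fav (f c))"
proof (induction C rule: finite_induct)
  case empty then show ?case by (simp add: Fav_empty)
next
  case (insert x F)
  have "Fav (\<Union>c\<in>insert x F. f c) \<le> Fav (f x) + Fav (\<Union>c\<in>F. f c)" by (simp add: Fav_Un)
  also have "\<dots> \<le> Fav (f x) + (\<Sum>c\<in>F. Fav (f c))" using insert by (intro add_mono) auto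
  finally show ?case using insert by simp
qed

lemma sets_LS: "sets (lborel \<Otimes>\<^sub>M sigma_S1) = sets (borel :: (real \<times> (real^2)) measure)"
proof -
  have "sets (lborel \<Otimes>\<^sub>M sigma_S1) = sets ((borel::real measure) \<Otimes>\<^sub>M (borel :: (real^2) measure))"
    by (rule sets_pair_measure_cong) simp_all
  then show ?thesis by (metis borel_prod)
qed

lemma Fav_cover:
  fixes rho :: "nat \<Rightarrow> real"
  assumes rho: "\<forall>i. 0 \<le> rho i" and cov: "Y \<subseteq> (\<Union>i. ball (c i) (rho i))" and G: "G \<in> sets borel"
  shows "Fav (Y \<times> G) \<le> (\<Sum>i. ennreal (2 * rho i)) * emeasure sigma_S1 G"
proof -
  let ?M = "lborel \<Otimes>\<^sub>M sigma_S1"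
  let ?s = "(\<Sum>i. ennreal (2 * rho i))"
  define Q where "Q = {p::real \<times> (real^2). snd p \<in> G \<inter> sphere 0 1 \<and> (\<exists>i. \<bar>fst p - c i \<bullet> snd p\<bar> < rho i)}"
  have opn: "open {p::real \<times> (real^2). \<bar>fst p - c i \<bullet> snd p\<bar> < rho i}" for i
    by (intro open_Collect_less continuous_intros)
  have "UNIV \<times> (G \<inter> sphere 0 1) \<in> sets ?M"
    using G by (intro pair_measureI) auto
  moreover have "(\<Union>i. {p::real \<times> (real^2). \<bar>fst p - c i \<bullet> snd p\<bar> < rho i}) \<in> sets ?M"
    unfolding sets_LS using opn by (intro sets.countable_UN borel_open) auto
  ultimately have "(UNIV \<times> (G \<inter> sphere 0 1)) \<inter> (\<Union>i. {p::real \<times> (real^2). \<bar>fst p - c i \<bullet> snd p\<bar> < rho i}) \<in> sets ?M"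
    by (rule sets.Int)
  moreover have "(UNIV \<times> (G \<inter> sphere 0 1)) \<inter> (\<Union>i. {p::real \<times> (real^2). \<bar>fst p - c i \<bullet> snd p\<bar> < rho i}) = Q"
    by (auto simp: Q_def)
  ultimately have Qm: "Q \<in> sets ?M" by simp
  have sub: "TF (Y \<times> G) \<subseteq> Q"
  proof
    fix p assume "p \<in> TF (Y \<times> G)"
    then obtain t w x where p: "p = (t, w)" "w \<in> sphere 0 1" "x \<bullet> w = t" "x \<in> Y" "w \<in> G"
      by (auto simp: TF_def)
    from cov p(4) obtain i where "x \<in> ball (c i) (rho i)" by blast
    then have d: "norm (x - c i) < rho i" by (simp add: dist_norm norm_minus_commute)
    have "\<bar>(x - c i) \<bullet> w\<bar> \<le> norm (x - c i) * norm w" by (rule Cauchy_Schwarz_ineq2)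
    also have "\<dots> = norm (x - c i)" using p(2) by simp
    finally have "\<bar>t - c i \<bullet> w\<bar> < rho i" using d p(3) by (simp add: inner_diff_left)
    then show "p \<in> Q" using p by (auto simp: Q_def)
  qed
  have "Fav (Y \<times> G) \<le> outer_measure_of ?M Q"
    unfolding Fav_TF by (rule outer_measure_of_mono[OF sub])
  also have "\<dots> = emeasure ?M Q" using Qm by simp
  also have "\<dots> = (\<integral>\<^sup>+w. emeasure lborel ((\<lambda>x. (x, w)) -` Q) \<partial>sigma_S1)"
    by (rule LS.emeasure_pair_measure_alt2[OF Qm])
  also have "\<dots> \<le> (\<integral>\<^sup>+w. ?s * indicator G w \<partial>sigma_S1)"
  proof (rule nn_integral_mono)
    fix w :: "real^2"
    show "emeasure lborel ((\<lambda>x. (x, w)) -` Q) \<le> ?s * indicator G w"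
    proof (cases "w \<in> G \<inter> sphere 0 1")
      case True
      have "(\<lambda>x. (x, w)) -` Q = (\<Union>i. {c i \<bullet> w - rho i <..< c i \<bullet> w + rho i})"
      proof (rule set_eqI)
        fix x :: real
        have "x \<in> (\<lambda>x. (x, w)) -` Q \<longleftrightarrow> (\<exists>i. \<bar>x - c i \<bullet> w\<bar> < rho i)"
          using True by (simp add: Q_def)
        also have "\<dots> \<longleftrightarrow> x \<in> (\<Union>i. {c i \<bullet> w - rho i <..< c i \<bullet> w + rho i})"
          by (simp add: abs_diff_less_iff)
        finally show "x \<in> (\<lambda>x. (x, w)) -` Q \<longleftrightarrow> x \<in> (\<Union>i. {c i \<bullet> w - rho i <..< c i \<bullet> w + rho i})" .
      qed
      then have "emeasure lborel ((\<lambda>x. (x, w)) -` Q) = emeasure lborel (\<Union>i. {c i \<bullet> w - rho i <..< c i \<bullet> w + rho i})"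
        by simp
      also have "\<dots> \<le> (\<Sum>i. emeasure lborel {c i \<bullet> w - rho i <..< c i \<bullet> w + rho i})"
        by (intro emeasure_subadditive_countably) auto
      also have "\<dots> = ?s" using rho by (intro suminf_cong) simp
      finally show ?thesis using True by simp
    next
      case False
      then have "(\<lambda>x. (x, w)) -` Q = {}" by (auto simp: Q_def)
      then show ?thesis by simp
    qed
  qed
  also have "\<dots> = ?s * emeasure sigma_S1 G"
    using G by (intro nn_integral_cmult_indicator) simp
  finally show ?thesis .
qed

lemma Fav_rect:
  assumes G: "G \<in> sets borel" and fin: "spherical1 Y < top"
  shows "Fav (Y \<times> G) \<le> spherical1 Y * emeasure sigma_S1 G"
proof -
  have "sph_content 1 Y \<le> spherical1 Y" by (rule S_ge_sc) simp
  then have sc: "sph_content 1 Y < top" using fin by (rule le_less_trans)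
  have main: "Fav (Y \<times> G) \<le> sph_content 1 Y * emeasure sigma_S1 G"
  proof (cases "emeasure sigma_S1 G = 0")
    case True
    obtain c and rho :: "nat \<Rightarrow> real" where cr: "\<forall>i. 0 \<le> rho i \<and> rho i \<le> 1" "Y \<subseteq> (\<Union>i. ball (c i) (rho i))"
      by (rule sc_less[OF sc])
    have r0: "\<forall>i. 0 \<le> rho i" using cr(1) by blast
    have "Fav (Y \<times> G) \<le> (\<Sum>i. ennreal (2 * rho i)) * emeasure sigma_S1 G"
      by (rule Fav_cover[OF r0 cr(2) G])
    then show ?thesis unfolding True by simp
  next
    case False
    obtain kr where kr: "emeasure sigma_S1 G = ennreal kr" "0 \<le> kr"
      using S1.emeasure_finite[of G] by (cases "emeasure sigma_S1 G" rule: ennreal_cases) blast+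
    with False have kpos: "0 < kr" by (cases "kr = 0") auto
    show ?thesis
    proof (rule ennreal_le_epsilon)
      fix e :: real assume e: "0 < e"
      have "0 < e / kr" using e kpos by simp
      then have "0 < ennreal (e / kr)" by simp
      then have "sph_content 1 Y + 0 < sph_content 1 Y + ennreal (e / kr)"
        using sc by (subst ennreal_add_left_cancel_less) simp
      then have lt: "sph_content 1 Y < sph_content 1 Y + ennreal (e / kr)" by simp
      obtain c and rho :: "nat \<Rightarrow> real" where cr: "\<forall>i. 0 \<le> rho i \<and> rho i \<le> 1" "Y \<subseteq> (\<Union>i. ball (c i) (rho i))"
        "(\<Sum>i. ennreal (2 * rho i)) < sph_content 1 Y + ennreal (e / kr)"
        by (rule sc_less[OF lt])
      have r0: "\<forall>i. 0 \<le> rho i" using cr(1) by blast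
      have "Fav (Y \<times> G) \<le> (\<Sum>i. ennreal (2 * rho i)) * emeasure sigma_S1 G"
        by (rule Fav_cover[OF r0 cr(2) G])
      also have "\<dots> \<le> (sph_content 1 Y + ennreal (e / kr)) * emeasure sigma_S1 G"
        by (rule mult_right_mono) (use cr(3) in auto)
      also have "\<dots> = sph_content 1 Y * emeasure sigma_S1 G + ennreal (e / kr) * ennreal kr"
        unfolding kr(1) by (rule distrib_right)
      also have "ennreal (e / kr) * ennreal kr = ennreal (e / kr * kr)"
        by (rule ennreal_mult[symmetric]) (use e kpos in simp_all)
      also have "e / kr * kr = e" using kpos by simp
      finally show "Fav (Y \<times> G) \<le> sph_content 1 Y * emeasure sigma_S1 G + ennreal e" .
    qed
  qed
  also have "\<dots> \<le> spherical1 Y * emeasure sigma_S1 G"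
    by (rule mult_right_mono[OF \<open>sph_content 1 Y \<le> spherical1 Y\<close>]) simp
  finally show ?thesis .
qed

definition Rect :: "(real^2) set \<Rightarrow> ((real^2) \<times> (real^2)) set set" where
  "Rect E = {a \<times> b | a b. a \<in> sets (mu_E E) \<and> b \<in> sets sigma_S1}"

lemma semiring_Rect: "semiring_of_sets UNIV (Rect E)"
proof
  show "Rect E \<subseteq> Pow UNIV" by simp
  show "{} \<in> Rect E" unfolding Rect_def by (intro CollectI exI[of _ "{}"]) auto
  fix x y assume x: "x \<in> Rect E" and y: "y \<in> Rect E"
  from x obtain a b where ab: "x = a \<times> b" "a \<in> sets (mu_E E)" "b \<in> sets sigma_S1" by (auto simp: Rect_def)
  from y obtain c d where cd: "y = c \<times> d" "c \<in> sets (mu_E E)" "d \<in> sets sigma_S1" by (auto simp: Rect_def)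
  have "x \<inter> y = (a \<inter> c) \<times> (b \<inter> d)" using ab cd by auto
  then show "x \<inter> y \<in> Rect E" using ab cd unfolding Rect_def by blast
  let ?C = "{(a - c) \<times> b, (a \<inter> c) \<times> (b - d)}"
  have "?C \<subseteq> Rect E" using ab cd unfolding Rect_def by blast
  moreover have "disjoint ?C" by (auto simp: disjoint_def)
  moreover have "x - y = \<Union>?C" using ab cd by auto
  ultimately show "\<exists>C\<subseteq>Rect E. finite C \<and> disjoint C \<and> x - y = \<Union>C" by blast
qed

lemma sets_lam: "sets (mu_E E \<Otimes>\<^sub>M sigma_S1) = sigma_sets UNIV (Rect E)"
  unfolding sets_pair_measure Rect_def by simp

lemma finite_mu_E: "spherical1 E < top \<Longrightarrow> finite_measure (mu_E E)"
  by (rule finite_measureI) (simp add: emeasure_mu_E)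

lemma Fav_Rect:
  assumes fin: "spherical1 E < top" and x: "x \<in> Rect E"
  shows "Fav (x \<inter> (E \<times> UNIV)) \<le> emeasure (mu_E E \<Otimes>\<^sub>M sigma_S1) x"
proof -
  from x obtain a b where ab: "x = a \<times> b" "a \<in> sets (mu_E E)" "b \<in> sets sigma_S1" by (auto simp: Rect_def)
  obtain a' where a': "a' \<in> sets borel" "a \<subseteq> a'" "emeasure (mu_E E) a' = emeasure (mu_E E) a"
    using mu_E_upper[OF ab(2)] by blast
  have "x \<inter> (E \<times> UNIV) \<subseteq> (a' \<inter> E) \<times> b" using ab a' by auto
  then have "Fav (x \<inter> (E \<times> UNIV)) \<le> Fav ((a' \<inter> E) \<times> b)" by (rule Fav_mono)
  also have "\<dots> \<le> spherical1 (a' \<inter> E) * emeasure sigma_S1 b"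
  proof (rule Fav_rect)
    show "b \<in> sets borel" using ab by simp
    have "spherical1 (a' \<inter> E) \<le> spherical1 E" by (rule S_mono) auto
    then show "spherical1 (a' \<inter> E) < top" using fin by (rule le_less_trans)
  qed
  also have "\<dots> = emeasure (mu_E E) a * emeasure sigma_S1 b"
    using a' by (simp add: emeasure_mu_E)
  also have "\<dots> = emeasure (mu_E E \<Otimes>\<^sub>M sigma_S1) x"
    unfolding ab(1) by (rule S1.emeasure_pair_measure_Times[symmetric]) (use ab in auto)
  finally show ?thesis .
qed

lemma Fav_gen_ring:
  assumes fin: "spherical1 E < top" and x: "x \<in> semiring_of_sets.generated_ring (Rect E)"
  shows "Fav (x \<inter> (E \<times> UNIV)) \<le> emeasure (mu_E E \<Otimes>\<^sub>M sigma_S1) x"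
proof -
  interpret SR: semiring_of_sets UNIV "Rect E" by (rule semiring_Rect)
  from x obtain C where C: "finite C" "disjoint C" "C \<subseteq> Rect E" "x = \<Union>C"
    by (rule SR.generated_ringE)
  have "x \<inter> (E \<times> UNIV) = (\<Union>c\<in>C. c \<inter> (E \<times> UNIV))" using C by auto
  then have "Fav (x \<inter> (E \<times> UNIV)) \<le> (\<Sum>c\<in>C. Fav (c \<inter> (E \<times> UNIV)))"
    using Fav_finite[OF C(1), of "\<lambda>c. c \<inter> (E \<times> UNIV)"] by (simp only:)
  also have "\<dots> \<le> (\<Sum>c\<in>C. emeasure (mu_E E \<Otimes>\<^sub>M sigma_S1) c)"
    using C(3) by (intro sum_mono Fav_Rect[OF fin]) auto
  also have "\<dots> = emeasure (mu_E E \<Otimes>\<^sub>M sigma_S1) (\<Union>c\<in>C. c)"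
  proof (rule sum_emeasure)
    show "(\<lambda>c. c) ` C \<subseteq> sets (mu_E E \<Otimes>\<^sub>M sigma_S1)"
      using C(3) unfolding sets_lam by auto
    show "disjoint_family_on (\<lambda>c. c) C" using C(2) by (auto simp: disjoint_family_on_def disjoint_def)
  qed (rule C(1))
  also have "(\<Union>c\<in>C. c) = x" using C by simp
  finally show ?thesis .
qed

lemma lam_outer:
  assumes fin: "spherical1 E < top" and B: "B \<in> sets (mu_E E \<Otimes>\<^sub>M sigma_S1)"
  shows "emeasure (mu_E E \<Otimes>\<^sub>M sigma_S1) B =
    outer_measure (semiring_of_sets.generated_ring (Rect E)) (emeasure (mu_E E \<Otimes>\<^sub>M sigma_S1)) B"
proof -
  interpret SR: semiring_of_sets UNIV "Rect E" by (rule semiring_Rect)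
  let ?R = "semiring_of_sets.generated_ring (Rect E)"
  let ?L = "mu_E E \<Otimes>\<^sub>M sigma_S1"
  let ?f = "emeasure ?L"
  interpret RR: ring_of_sets UNIV ?R by (rule SR.generating_ring)
  have sR: "sigma_sets UNIV ?R = sets ?L" by (simp only: SR.sigma_sets_generated_ring_eq sets_lam)
  have Rsub: "?R \<subseteq> sets ?L"
  proof
    fix x assume "x \<in> ?R"
    then have "x \<in> sigma_sets UNIV ?R" by (rule sigma_sets.Basic)
    then show "x \<in> sets ?L" using sR by simp
  qed
  have ms: "measure_space (space ?L) (sets ?L) ?f" by (rule measure_space)
  have pos: "positive ?R ?f" by (simp add: positive_def)
  have ca: "countably_additive ?R ?f"
    using ms Rsub unfolding measure_space_def countably_additive_def by blast
  have inc: "increasing ?R ?f" unfolding increasing_def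
  proof (intro ballI impI)
    fix x y assume "x \<in> ?R" "y \<in> ?R" "x \<subseteq> y"
    then show "?f x \<le> ?f y" by (intro emeasure_mono) (use Rsub in blast)+
  qed
  have add: "additive ?R ?f" unfolding additive_def
  proof (intro ballI impI)
    fix x y assume "x \<in> ?R" "y \<in> ?R" "x \<inter> y = {}"
    then show "?f (x \<union> y) = ?f x + ?f y" by (intro plus_emeasure[symmetric]) (use Rsub in blast)+
  qed
  define g where "g = outer_measure ?R ?f"
  interpret P: sigma_algebra "UNIV :: ((real^2) \<times> (real^2)) set" "Pow UNIV" by (rule sigma_algebra_Pow)
  have oms: "outer_measure_space (Pow UNIV) g" unfolding g_def by (rule RR.outer_measure_space_outer_measure[OF pos inc])
  have msL: "measure_space UNIV (lambda_system UNIV (Pow UNIV) g) g" by (rule P.caratheodory_lemma[OF oms])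
  have Rlam: "?R \<subseteq> lambda_system UNIV (Pow UNIV) g" unfolding g_def by (rule RR.algebra_subset_lambda_system[OF pos inc add])
  have "sigma_sets UNIV ?R \<subseteq> lambda_system UNIV (Pow UNIV) g"
    by (rule sigma_algebra.sigma_sets_subset[OF _ Rlam]) (use msL in \<open>simp add: measure_space_def\<close>)
  then have msg: "measure_space UNIV (sigma_sets UNIV ?R) g"
    by (intro measure_down[OF msL] sigma_algebra_sigma_sets) auto
  define N where "N = measure_of UNIV (sigma_sets UNIV ?R) g"
  have sN: "sets N = sigma_sets UNIV ?R" unfolding N_def
    by (rule sigma_algebra.sets_measure_of_eq) (rule sigma_algebra_sigma_sets, auto)
  have eN: "emeasure N X = g X" if "X \<in> sigma_sets UNIV ?R" for X
    unfolding N_def by (rule emeasure_measure_of_sigma) (use msg that in \<open>auto simp: measure_space_def\<close>)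
  have UNIV_R: "UNIV \<in> ?R"
  proof -
    have "(UNIV :: (real^2) set) \<times> (UNIV :: (real^2) set) \<in> Rect E"
    proof -
      have "UNIV \<in> sets (mu_E E)" using sets.top[of "mu_E E"] by simp
      moreover have "UNIV \<in> sets sigma_S1" using sets.top[of sigma_S1] by simp
      ultimately show ?thesis unfolding Rect_def by blast
    qed
    then show ?thesis by (simp add: SR.generated_ringI_Basic)
  qed
  have finL: "emeasure ?L UNIV \<noteq> \<infinity>"
  proof -
    have "emeasure ?L (UNIV \<times> UNIV) = emeasure (mu_E E) UNIV * emeasure sigma_S1 UNIV"
      by (rule S1.emeasure_pair_measure_Times) (use sets.top[of "mu_E E"] sets.top[of sigma_S1] in simp_all)
    also have "\<dots> = spherical1 E" by (simp add: emeasure_mu_E sigma_S1_UNIV)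
    finally show ?thesis using fin by simp
  qed
  have "?L = N"
  proof (rule measure_eqI_generator_eq[where E = ?R and \<Omega> = UNIV and A = "\<lambda>_. UNIV"])
    show "Int_stable ?R" unfolding Int_stable_def by auto
    show "?R \<subseteq> Pow UNIV" by auto
    fix X assume X: "X \<in> ?R"
    have "emeasure N X = g X" using X by (intro eN sigma_sets.Basic)
    also have "\<dots> = ?f X" unfolding g_def by (rule RR.outer_measure_agrees[OF pos ca X])
    finally show "emeasure ?L X = emeasure N X" by simp
  next
    show "sets ?L = sigma_sets UNIV ?R" using sR by simp
    show "sets N = sigma_sets UNIV ?R" by (rule sN)
    show "range (\<lambda>_. UNIV) \<subseteq> ?R" using UNIV_R by auto
    show "(\<Union>i::nat. UNIV) = UNIV" by simp
    show "\<And>i::nat. emeasure ?L UNIV \<noteq> \<infinity>" by (rule finL)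
  qed
  then show ?thesis using B sR eN unfolding g_def by simp
qed

theorem lemma5p1:
  shows "\<exists>C::real. C > 0 \<and>
    (\<forall>E :: (real^2) set. compact E \<and> spherical1 E < \<infinity> \<longrightarrow>
      (\<forall>A \<in> sets (completion (mu_E E \<Otimes>\<^sub>M sigma_S1)).
         A \<subseteq> E \<times> sphere 0 1 \<longrightarrow>
         Fav A \<le> ennreal C * emeasure (completion (mu_E E \<Otimes>\<^sub>M sigma_S1)) A))"
proof (intro exI[of _ 1] conjI allI impI ballI)
  show "(0::real) < 1" by simp
  fix E :: "(real^2) set" assume "compact E \<and> spherical1 E < \<infinity>"
  then have fin: "spherical1 E < top" by simp
  let ?L = "mu_E E \<Otimes>\<^sub>M sigma_S1"
  let ?R = "semiring_of_sets.generated_ring (Rect E)"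
  fix A assume A: "A \<in> sets (completion ?L)" and Asub: "A \<subseteq> E \<times> sphere 0 1"
  obtain S N N' where SN: "A = S \<union> N" "N \<subseteq> N'" "N' \<in> null_sets ?L" "S \<in> sets ?L"
    by (rule sets_completionE[OF A])
  define B where "B = S \<union> N'"
  have B: "B \<in> sets ?L" using SN by (auto simp: B_def)
  have "A \<subseteq> B \<inter> (E \<times> UNIV)" using SN Asub by (auto simp: B_def)
  then have "Fav A \<le> Fav (B \<inter> (E \<times> UNIV))" by (rule Fav_mono)
  also have "\<dots> \<le> outer_measure ?R (emeasure ?L) B"
    unfolding outer_measure_def
  proof (rule INF_greatest, clarify)
    fix C :: "nat \<Rightarrow> ((real^2) \<times> (real^2)) set"
    assume C: "range C \<subseteq> ?R" "disjoint_family C" "B \<subseteq> (\<Union>i. C i)"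
    have "Fav (B \<inter> (E \<times> UNIV)) \<le> Fav (\<Union>i. C i \<inter> (E \<times> UNIV))"
      by (rule Fav_mono) (use C(3) in blast)
    also have "\<dots> \<le> (\<Sum>i. Fav (C i \<inter> (E \<times> UNIV)))" by (rule Fav_UN)
    also have "\<dots> \<le> (\<Sum>i. emeasure ?L (C i))"
      using C(1) by (intro suminf_le Fav_gen_ring[OF fin]) auto
    finally show "Fav (B \<inter> (E \<times> UNIV)) \<le> (\<Sum>i. emeasure ?L (C i))" .
  qed
  also have "\<dots> = emeasure ?L B" by (rule lam_outer[OF fin B, symmetric])
  also have "emeasure ?L B = emeasure ?L S" unfolding B_def using SN by (intro emeasure_Un_null_set) auto
  also have "\<dots> = emeasure (completion ?L) S" using SN by simp
  also have "\<dots> \<le> emeasure (completion ?L) A" by (rule emeasure_mono) (use SN A in auto)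
  finally show "Fav A \<le> ennreal 1 * emeasure (completion ?L) A" by simp
qed

end
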